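(* Let $d\ge1$, $0<\mu\le L$, let $A\in\mathbb{R}^{d\times d}$ be symmetric with $\mu I\preceq A\preceq LI$, $b\in\mathbb{R}^d$, $f(x)=\frac12x^\top Ax+b^\top x$, and let $\{x_t\},\{G_t\}$ be generated by Sharpened-BFGS for quadratics from an arbitrary $x_0$, assuming $\nabla f(x_t)\neq0$ for all $t$ considered. Then for all $t\ge1$, $$\lambda_t\le\left(1-\frac{\mu}{dL}\right)^{\frac{t(t-1)}{4}}\left(\frac{dL}{t\mu}\right)^{\frac t2}\lambda_0,$$ where $\lambda_t:=\lambda_f(x_t)$.
   Context: For symmetric positive definite $A,G\in\mathbb{R}^{d\times d}$ and $u\in\mathbb{R}^d\setminus\{0\}$, the BFGS operator is $\mathrm{BFGS}(A,G,u):=G-\frac{Guu^\top G}{u^\top Gu}+\frac{Auu^\top A}{u^\top Au}$. The greedy vector is $\bar u(A,G):=\arg\max_{u\in\{e_1,\dots,e_d\}}\frac{u^\top Gu}{u^\top Au}$ (ties broken arbitrarily). The Newton decrement is $\lambda_f(x):=\sqrt{\nabla f(x)^\top\nabla^2 f(x)^{-1}\nabla f(x)}$. Sharpened-BFGS for quadratics: set $G_0=LI$; for $t=0,1,2,\dots$: $x_{t+1}=x_t-G_t^{-1}\nabla f(x_t)$, $s_t=x_{t+1}-x_t$, $\bar G_t=\mathrm{BFGS}(A,G_t,s_t)$, $\bar u=\bar u(A,\bar G_t)$, $G_{t+1}=\mathrm{BFGS}(A,\bar G_t,\bar u)$. *)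

theory Defs
  imports "HOL-Analysis.Analysis"
begin

definition outer :: "real^'n \<Rightarrow> real^'n \<Rightarrow> real^'n^'n" where
  "outer u v = (\<chi> i j. u $ i * v $ j)"

definition BFGS :: "real^'n^'n \<Rightarrow> real^'n^'n \<Rightarrow> real^'n \<Rightarrow> real^'n^'n" where
  "BFGS A G u = G - (1 / (u \<bullet> (G *v u))) *\<^sub>R (G ** outer u u ** G)
                  + (1 / (u \<bullet> (A *v u))) *\<^sub>R (A ** outer u u ** A)"

definition greedy_vec :: "real^'n^'n \<Rightarrow> real^'n^'n \<Rightarrow> real^'n \<Rightarrow> bool" where
  "greedy_vec A G u \<longleftrightarrow> u \<in> range (\<lambda>i. axis i 1) \<and>
     (\<forall>v \<in> range (\<lambda>i. axis i 1).
        (v \<bullet> (G *v v)) / (v \<bullet> (A *v v)) \<le> (u \<bullet> (G *v u)) / (u \<bullet> (A *v u)))"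

definition quad_f :: "real^'n^'n \<Rightarrow> real^'n \<Rightarrow> real^'n \<Rightarrow> real" where
  "quad_f A b x = (1/2) * (x \<bullet> (A *v x)) + b \<bullet> x"

definition quad_grad :: "real^'n^'n \<Rightarrow> real^'n \<Rightarrow> real^'n \<Rightarrow> real^'n" where
  "quad_grad A b x = A *v x + b"

text \<open>Newton decrement lambda_f(x) = sqrt(grad^T (Hess)^{-1} grad); Hessian of quad_f is A
  (for symmetric A).\<close>
definition newton_decrement :: "real^'n^'n \<Rightarrow> real^'n \<Rightarrow> real^'n \<Rightarrow> real" where
  "newton_decrement A b x = sqrt (quad_grad A b x \<bullet> (matrix_inv A *v quad_grad A b x))"

definition sharpened_bfgs ::
  "real^'n^'n \<Rightarrow> real^'n \<Rightarrow> real \<Rightarrow> (nat \<Rightarrow> real^'n) \<Rightarrow> (nat \<Rightarrow> real^'n^'n) \<Rightarrow> bool" where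
  "sharpened_bfgs A b L x G \<longleftrightarrow>
     G 0 = L *\<^sub>R mat 1 \<and>
     (\<forall>t. x (Suc t) = x t - matrix_inv (G t) *v quad_grad A b (x t) \<and>
          (let s = x (Suc t) - x t; Gbar = BFGS A (G t) s in
           \<exists>u. greedy_vec A Gbar u \<and> G (Suc t) = BFGS A Gbar u))"

end

theory Submission
  imports Defs
begin

lemma outer_mulv: "outer u w *v v = (w \<bullet> v) *\<^sub>R (u::real^'n)"
  by (simp add: vec_eq_iff outer_def matrix_vector_mult_def inner_vec_def sum_distrib_left mult_ac)

lemma bfgs_mulv:
  "BFGS A G u *v v = G *v v - ((u \<bullet> (G *v v)) / (u \<bullet> (G *v u))) *\<^sub>R (G *v u)
     + ((u \<bullet> (A *v v)) / (u \<bullet> (A *v u))) *\<^sub>R (A *v u)"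
  by (simp add: BFGS_def matrix_vector_mult_add_rdistrib matrix_vector_mult_diff_rdistrib
      scaleR_matrix_vector_assoc[symmetric] matrix_vector_mul_assoc[symmetric] outer_mulv
      matrix_vector_mult_scaleR)

definition symm :: "real^'n^'n \<Rightarrow> bool" where
  "symm M \<longleftrightarrow> (\<forall>x y. x \<bullet> (M *v y) = y \<bullet> (M *v x))"

lemma axis_inner: "axis i 1 \<bullet> (x::real^'n) = x $ i"
  by (simp add: inner_axis')

lemma sum_comp: "(\<Sum>i\<in>UNIV. (x::real^'n) $ i * y $ i) = x \<bullet> y"
  by (simp add: inner_vec_def)

lemma quad_expand:
  assumes "symm M"
  shows "(x + c *\<^sub>R y) \<bullet> (M *v (x + c *\<^sub>R y)) = x \<bullet> (M *v x) + 2 * c * (y \<bullet> (M *v x)) + c^2 * (y \<bullet> (M *v y))"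
proof -
  have "x \<bullet> (M *v y) = y \<bullet> (M *v x)" using assms by (simp add: symm_def)
  then show ?thesis
    by (simp add: matrix_vector_right_distrib matrix_vector_mult_scaleR inner_add_left inner_add_right
        algebra_simps power2_eq_square)
qed

lemma cs_form:
  assumes "symm M" and psd: "\<And>v. 0 \<le> v \<bullet> (M *v v)"
  shows "(x \<bullet> (M *v z))^2 \<le> (x \<bullet> (M *v x)) * (z \<bullet> (M *v z))"
proof -
  have sy: "x \<bullet> (M *v z) = z \<bullet> (M *v x)" using assms(1) by (simp add: symm_def)
  have q: "\<And>c. 0 \<le> x \<bullet> (M *v x) + 2 * c * (z \<bullet> (M *v x)) + c^2 * (z \<bullet> (M *v z))"
    using psd quad_expand[OF assms(1)] by metis
  show ?thesis
  proof (cases "z \<bullet> (M *v z) = 0")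
    case True
    show ?thesis
    proof (cases "z \<bullet> (M *v x) = 0")
      case False
      have "0 \<le> x \<bullet> (M *v x) + 2 * (-(x \<bullet> (M *v x) + 1) / (2 * (z \<bullet> (M *v x)))) * (z \<bullet> (M *v x))"
        using q[of "-(x \<bullet> (M *v x) + 1) / (2 * (z \<bullet> (M *v x)))"] True by simp
      then show ?thesis using False by (simp add: field_simps)
    qed (use sy True in simp)
  next
    case False
    then have pos: "z \<bullet> (M *v z) > 0" using psd[of z] by simp
    have "0 \<le> x \<bullet> (M *v x) + 2 * (-(z \<bullet> (M *v x)) / (z \<bullet> (M *v z))) * (z \<bullet> (M *v x))
              + (-(z \<bullet> (M *v x)) / (z \<bullet> (M *v z)))^2 * (z \<bullet> (M *v z))"
      using q by blast
    then have "0 \<le> (x \<bullet> (M *v x)) * (z \<bullet> (M *v z)) - (z \<bullet> (M *v x))^2"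
      using pos by (simp add: field_simps power2_eq_square)
    then show ?thesis using sy by simp
  qed
qed

lemma trace_psd:
  fixes M :: "real^'n^'n"
  assumes Mpsd: "\<And>w. 0 \<le> w \<bullet> (M *v w)"
  shows "symm D \<Longrightarrow> (\<And>v. 0 \<le> v \<bullet> (D *v v)) \<Longrightarrow> 0 \<le> (\<Sum>i\<in>UNIV. axis i 1 \<bullet> (M *v (D *v axis i 1)))"
proof (induction "card {i. D *v axis i 1 \<noteq> 0}" arbitrary: D rule: less_induct)
  case less
  show ?case
  proof (cases "\<exists>i. D *v axis i 1 \<noteq> 0")
    case False
    then show ?thesis by simp
  next
    case True
    then obtain i where i: "D *v axis i 1 \<noteq> 0" by blast
    define w where "w = D *v axis i 1"
    define c where "c = axis i 1 \<bullet> w"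
    have cs: "\<And>v. (v \<bullet> w)^2 \<le> (v \<bullet> (D *v v)) * c"
      unfolding w_def c_def using cs_form[OF less.prems(1) less.prems(2)] by blast
    have "c \<noteq> 0"
    proof
      assume "c = 0"
      then have "(w \<bullet> w)^2 \<le> 0" using cs[of w] by simp
      then show False using i w_def by simp
    qed
    then have cpos: "c > 0" using less.prems(2)[of "axis i 1"] unfolding c_def w_def by simp
    define D' where "D' = D - (1/c) *\<^sub>R outer w w"
    have D'v: "\<And>v. D' *v v = D *v v - ((w \<bullet> v) / c) *\<^sub>R w"
      by (simp add: D'_def matrix_vector_mult_diff_rdistrib scaleR_matrix_vector_assoc[symmetric] outer_mulv)
    have wsym: "\<And>v. w \<bullet> v = axis i 1 \<bullet> (D *v v)"
      using less.prems(1) unfolding symm_def w_def by (metis inner_commute)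
    have symD': "symm D'"
      using less.prems(1) unfolding symm_def D'v
      by (simp add: inner_diff_right inner_commute)
    have psdD': "\<And>v. 0 \<le> v \<bullet> (D' *v v)"
    proof -
      fix v
      have "(v \<bullet> w)^2 / c \<le> v \<bullet> (D *v v)" using cs[of v] cpos by (simp add: field_simps)
      then show "0 \<le> v \<bullet> (D' *v v)" unfolding D'v by (simp add: inner_diff_right power2_eq_square inner_commute)
    qed
    have sub: "{j. D' *v axis j 1 \<noteq> 0} \<subseteq> {j. D *v axis j 1 \<noteq> 0} - {i}"
    proof
      fix j assume "j \<in> {j. D' *v axis j 1 \<noteq> 0}"
      then have j: "D' *v axis j 1 \<noteq> 0" by simp
      have "j \<noteq> i"
      proof
        assume "j = i"
        then have "D' *v axis j 1 = w - (c / c) *\<^sub>R w" unfolding D'v by (simp add: w_def c_def inner_commute)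
        then show False using j cpos by simp
      qed
      moreover have "D *v axis j 1 \<noteq> 0"
      proof
        assume h: "D *v axis j 1 = 0"
        have "w \<bullet> axis j 1 = 0" using wsym[of "axis j 1"] h by simp
        then show False using j h unfolding D'v by simp
      qed
      ultimately show "j \<in> {j. D *v axis j 1 \<noteq> 0} - {i}" by simp
    qed
    have "card {j. D' *v axis j 1 \<noteq> 0} < card {j. D *v axis j 1 \<noteq> 0}"
    proof -
      have "card {j. D' *v axis j 1 \<noteq> 0} \<le> card ({j. D *v axis j 1 \<noteq> 0} - {i})"
        by (rule card_mono[OF _ sub]) simp
      also have "\<dots> < card {j. D *v axis j 1 \<noteq> 0}"
        using i by (intro card_Diff1_less) auto
      finally show ?thesis .
    qed
    then have IH: "0 \<le> (\<Sum>j\<in>UNIV. axis j 1 \<bullet> (M *v (D' *v axis j 1)))"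
      using less.hyps symD' psdD' by blast
    have split: "(\<Sum>j\<in>UNIV. axis j 1 \<bullet> (M *v (D *v axis j 1)))
       = (\<Sum>j\<in>UNIV. axis j 1 \<bullet> (M *v (D' *v axis j 1))) + (1/c) * (w \<bullet> (M *v w))"
    proof -
      have "\<And>j. axis j 1 \<bullet> (M *v (D *v axis j 1)) = axis j 1 \<bullet> (M *v (D' *v axis j 1))
               + (1/c) * (w $ j * (M *v w) $ j)"
        unfolding D'v by (simp add: matrix_vector_mult_diff_distrib matrix_vector_mult_scaleR
            inner_diff_right axis_inner inner_commute[of w])
      then have "(\<Sum>j\<in>UNIV. axis j 1 \<bullet> (M *v (D *v axis j 1))) = 
           (\<Sum>j\<in>UNIV. axis j 1 \<bullet> (M *v (D' *v axis j 1))) + (1/c) * (\<Sum>j\<in>UNIV. w $ j * (M *v w) $ j)"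
        by (simp add: sum.distrib sum_distrib_left)
      then show ?thesis by (simp add: sum_comp)
    qed
    show ?thesis unfolding split using IH Mpsd[of w] cpos by simp
  qed
qed


lemma mv_neg: "(M::real^'n^'n) *v (- v) = - (M *v v)"
  by (simp add: vec_eq_iff matrix_vector_mult_def sum_negf)

lemma inv_props:
  assumes "invertible (M::real^'n^'n)"
  shows "M ** matrix_inv M = mat 1" "matrix_inv M ** M = mat 1"
proof -
  have "\<exists>M'. M ** M' = mat 1 \<and> M' ** M = mat 1" using assms by (simp add: invertible_def)
  then have "M ** matrix_inv M = mat 1 \<and> matrix_inv M ** M = mat 1"
    unfolding matrix_inv_def by (rule someI_ex)
  then show "M ** matrix_inv M = mat 1" "matrix_inv M ** M = mat 1" by auto
qed

lemma mv_inv: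
  assumes "invertible (M::real^'n^'n)"
  shows "M *v (matrix_inv M *v y) = y" "matrix_inv M *v (M *v y) = y"
  using inv_props[OF assms] by (simp_all add: matrix_vector_mul_assoc)

lemma invertible_pd:
  fixes M :: "real^'n^'n"
  assumes "\<And>v. v \<noteq> 0 \<Longrightarrow> 0 < v \<bullet> (M *v v)"
  shows "invertible M"
proof -
  have "\<forall>x. M *v x = 0 \<longrightarrow> x = 0" using assms by force
  then show ?thesis using matrix_left_invertible_ker invertible_left_inverse by blast
qed


lemma sum_lt_twice: "2 * (\<Sum>k<t. k) = t * (t - 1::nat)"
proof (induction t)
  case (Suc t)
  then show ?case by (cases t) (simp_all add: algebra_simps)
qed simp

lemma real_part:
  fixes \<Lambda> \<sigma> \<theta> :: "nat \<Rightarrow> real" and q S :: real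
  assumes q: "0 < q"
    and F1: "\<And>t. \<sigma> (Suc t) \<le> q * (\<sigma> t - \<theta> t)"
    and s0: "\<And>t. 0 \<le> \<sigma> t" and th0: "\<And>t. 0 \<le> \<theta> t"
    and F2: "\<And>t. \<Lambda> (Suc t) \<le> \<theta> t * \<Lambda> t" and l0: "\<And>t. 0 \<le> \<Lambda> t"
    and S: "\<sigma> 0 \<le> S" and t: "1 \<le> t"
  shows "\<Lambda> t \<le> q ^ (t * (t - 1) div 2) * (S / t) ^ t * \<Lambda> 0"
proof -
  have P1: "\<Lambda> n \<le> (\<Prod>k<n. \<theta> k) * \<Lambda> 0" for n
  proof (induction n)
    case (Suc n)
    have "\<Lambda> (Suc n) \<le> \<theta> n * \<Lambda> n" by (rule F2)
    also have "\<dots> \<le> \<theta> n * ((\<Prod>k<n. \<theta> k) * \<Lambda> 0)" using Suc th0 by (intro mult_left_mono) auto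
    finally show ?case by (simp add: mult_ac)
  qed simp
  define w where "w k = \<theta> k / q ^ k" for k
  have P2: "(\<Sum>k<n. w k) \<le> \<sigma> 0 - \<sigma> n / q ^ n" for n
  proof (induction n)
    case (Suc n)
    have "\<sigma> (Suc n) / q ^ Suc n \<le> (\<sigma> n - \<theta> n) / q ^ n"
      using F1[of n] q by (simp add: field_simps)
    then show ?case using Suc by (simp add: w_def diff_divide_distrib)
  qed simp
  have wpos: "0 \<le> w k" for k using th0 q by (simp add: w_def)
  have P3: "(\<Sum>k<t. w k) \<le> S"
    using P2[of t] s0[of t] q S by (smt (verit) divide_nonneg_pos zero_less_power)
  have tpos: "0 < t" using t by simp
  have P4: "(\<Prod>k<t. w k) \<le> (S / t) ^ t"
  proof (cases "(\<Prod>k<t. w k) = 0")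
    case True
    have "0 \<le> S" using S s0[of 0] by simp
    then show ?thesis by (subst True) simp
  next
    case False
    then have pp: "0 < (\<Prod>k<t. w k)" using wpos by (simp add: less_le prod_nonneg)
    have "(\<Prod>k<t. w k) powr (1 / card {..<t}) \<le> (\<Sum>k<t. w k / card {..<t})"
      using arith_geom_mean[of "{..<t}" w] wpos tpos by auto
    also have "\<dots> = (\<Sum>k<t. w k) / t" by (simp add: sum_divide_distrib)
    also have "\<dots> \<le> S / t" using P3 tpos by (simp add: divide_right_mono)
    finally have h: "(\<Prod>k<t. w k) powr (1 / t) \<le> S / t" by simp
    have "(\<Prod>k<t. w k) = ((\<Prod>k<t. w k) powr (1 / t)) powr (real t)"
      using tpos pp by (simp add: powr_powr)
    also have "\<dots> = ((\<Prod>k<t. w k) powr (1 / t)) ^ t" using pp by (intro powr_realpow) (metis powr_gt_zero less_irrefl)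
    also have "\<dots> \<le> (S / t) ^ t" using h by (intro power_mono) auto
    finally show ?thesis .
  qed
  have P5: "(\<Prod>k<t. \<theta> k) = (\<Prod>k<t. w k) * q ^ (t * (t - 1) div 2)"
  proof -
    have "(\<Prod>k<t. \<theta> k) = (\<Prod>k<t. w k * q ^ k)" using q by (simp add: w_def)
    also have "\<dots> = (\<Prod>k<t. w k) * q ^ (\<Sum>k<t. k)" by (simp add: prod.distrib power_sum)
    also have "(\<Sum>k<t. k) = t * (t - 1) div 2" using sum_lt_twice[of t] by simp
    finally show ?thesis .
  qed
  have "\<Lambda> t \<le> (\<Prod>k<t. \<theta> k) * \<Lambda> 0" by (rule P1)
  also have "\<dots> \<le> (S / t) ^ t * q ^ (t * (t - 1) div 2) * \<Lambda> 0"
    unfolding P5 using P4 q l0[of 0] by (intro mult_right_mono) auto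
  finally show ?thesis by (simp add: mult_ac)
qed

locale qs =
  fixes A :: "real^'n^'n" and \<mu> L :: real
  assumes mu_pos: "0 < \<mu>" and muL: "\<mu> \<le> L" and symA: "symm A"
    and lowA: "\<And>v. \<mu> * (v \<bullet> v) \<le> v \<bullet> (A *v v)"
    and upA: "\<And>v. v \<bullet> (A *v v) \<le> L * (v \<bullet> v)"
begin

abbreviation "Ai \<equiv> matrix_inv A"

lemma A_pd: "v \<noteq> 0 \<Longrightarrow> 0 < v \<bullet> (A *v v)"
  using lowA[of v] mu_pos by (smt (verit) inner_gt_zero_iff mult_pos_pos)

lemma A_psd: "0 \<le> v \<bullet> (A *v v)"
  using A_pd[of v] by (cases "v = 0") auto

lemma A_inv: "invertible A" using A_pd invertible_pd by blast

lemma AAi: "A *v (Ai *v y) = y" and AiA: "Ai *v (A *v y) = y"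
  using mv_inv[OF A_inv] by auto

lemma Ai_quad: "x \<bullet> (Ai *v x) = (Ai *v x) \<bullet> (A *v (Ai *v x))"
  by (simp add: AAi inner_commute)

lemma Ai_sym: "x \<bullet> (Ai *v y) = y \<bullet> (Ai *v x)"
proof -
  have "x \<bullet> (Ai *v y) = (Ai *v y) \<bullet> (A *v (Ai *v x))" by (simp add: AAi inner_commute)
  also have "\<dots> = (Ai *v x) \<bullet> (A *v (Ai *v y))" using symA by (simp add: symm_def)
  also have "\<dots> = y \<bullet> (Ai *v x)" by (simp add: AAi inner_commute)
  finally show ?thesis .
qed

lemma symm_Ai: "symm Ai" using Ai_sym by (simp add: symm_def)

lemma Ai_psd: "0 \<le> x \<bullet> (Ai *v x)"
proof -
  have "0 \<le> \<mu> * ((Ai *v x) \<bullet> (Ai *v x))" using mu_pos by simp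
  then show ?thesis using lowA[of "Ai *v x"] Ai_quad[of x] by linarith
qed

lemma Ai_zero: "x \<bullet> (Ai *v x) = 0 \<Longrightarrow> x = 0"
proof -
  assume h: "x \<bullet> (Ai *v x) = 0"
  have "Ai *v x = 0"
  proof (rule ccontr)
    assume "Ai *v x \<noteq> 0"
    then show False using A_pd[of "Ai *v x"] h Ai_quad by simp
  qed
  then show "x = 0" using AAi[of x] by simp
qed

lemma Ai_up: "x \<bullet> (Ai *v x) \<le> (x \<bullet> x) / \<mu>"
proof -
  define y where "y = Ai *v x"
  have "\<mu> * (y \<bullet> y) \<le> y \<bullet> x" using lowA[of y] by (simp add: y_def AAi)
  also have "\<dots> \<le> norm y * norm x" by (rule Cauchy_Schwarz_ineq2[THEN order_trans[OF abs_ge_self]])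
  finally have 1: "\<mu> * (norm y)^2 \<le> norm y * norm x" by (simp add: power2_norm_eq_inner)
  have "\<mu> * norm y \<le> norm x"
  proof (cases "norm y = 0")
    case False
    then show ?thesis using 1 by (simp add: power2_eq_square mult_le_cancel_right)
  qed simp
  then have "norm y \<le> norm x / \<mu>" using mu_pos by (simp add: field_simps)
  then have "norm y * norm x \<le> norm x / \<mu> * norm x" by (rule mult_right_mono) simp
  moreover have "y \<bullet> x \<le> norm y * norm x" by (rule Cauchy_Schwarz_ineq2[THEN order_trans[OF abs_ge_self]])
  ultimately have "y \<bullet> x \<le> (norm x)^2 / \<mu>" by (simp add: power2_eq_square)
  then show ?thesis by (simp add: y_def inner_commute power2_norm_eq_inner)
qed

lemma cs_Ai: "(u \<bullet> y)^2 \<le> (u \<bullet> (A *v u)) * (y \<bullet> (Ai *v y))"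
proof -
  have "(u \<bullet> (A *v (Ai *v y)))^2 \<le> (u \<bullet> (A *v u)) * ((Ai *v y) \<bullet> (A *v (Ai *v y)))"
    using cs_form[OF symA A_psd] by blast
  then show ?thesis by (simp add: AAi inner_commute)
qed

definition good :: "real^'n^'n \<Rightarrow> bool" where
  "good G \<longleftrightarrow> symm G \<and> (\<forall>v. v \<bullet> (A *v v) \<le> v \<bullet> (G *v v))"

lemma good_symm: "good G \<Longrightarrow> x \<bullet> (G *v y) = y \<bullet> (G *v x)"
  by (simp add: good_def symm_def)

lemma good_ge: "good G \<Longrightarrow> v \<bullet> (A *v v) \<le> v \<bullet> (G *v v)"
  by (simp add: good_def)

lemma good_pd: "good G \<Longrightarrow> v \<noteq> 0 \<Longrightarrow> 0 < v \<bullet> (G *v v)"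
  using good_ge[of G v] A_pd[of v] by linarith

lemma good_inv: "good G \<Longrightarrow> invertible G"
  using good_pd invertible_pd by blast

lemma good_D: "good G \<Longrightarrow> symm (G - A)" "good G \<Longrightarrow> 0 \<le> v \<bullet> ((G - A) *v v)"
  using symA by (auto simp: good_def symm_def matrix_vector_mult_diff_rdistrib inner_diff_right)

lemma bfgs_inner:
  assumes "good G"
  shows "x \<bullet> (BFGS A G u *v y) = x \<bullet> (G *v y) - (u \<bullet> (G *v y)) * (u \<bullet> (G *v x)) / (u \<bullet> (G *v u))
       + (u \<bullet> (A *v y)) * (u \<bullet> (A *v x)) / (u \<bullet> (A *v u))"
  using good_symm[OF assms, of x u] symA[unfolded symm_def, rule_format, of x u]
  by (simp add: bfgs_mulv inner_diff_right inner_add_right)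

lemma good_bfgs:
  assumes g: "good G" and u: "u \<noteq> 0"
  shows "good (BFGS A G u)"
proof -
  have a: "0 < u \<bullet> (A *v u)" using A_pd u by blast
  have gg: "0 < u \<bullet> (G *v u)" using good_pd g u by blast
  have sy: "symm (BFGS A G u)"
    unfolding symm_def bfgs_inner[OF g] using good_symm[OF g] by (simp add: mult.commute)
  have ge: "v \<bullet> (A *v v) \<le> v \<bullet> (BFGS A G u *v v)" for v
  proof -
    define \<alpha> where "\<alpha> = (u \<bullet> (G *v v)) / (u \<bullet> (G *v u))"
    define w where "w = v + (-\<alpha>) *\<^sub>R u"
    have wG: "w \<bullet> (G *v w) = v \<bullet> (G *v v) - (u \<bullet> (G *v v))^2 / (u \<bullet> (G *v u))"
      unfolding w_def quad_expand[OF g[unfolded good_def, THEN conjunct1]] \<alpha>_def using gg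
      by (simp add: field_simps power2_eq_square)
    have wA: "w \<bullet> (A *v w) = v \<bullet> (A *v v) - 2 * \<alpha> * (u \<bullet> (A *v v)) + \<alpha>^2 * (u \<bullet> (A *v u))"
      unfolding w_def quad_expand[OF symA] by simp
    have "0 \<le> (\<alpha> * (u \<bullet> (A *v u)) - u \<bullet> (A *v v))^2" by simp
    then have "v \<bullet> (A *v v) - (u \<bullet> (A *v v))^2 / (u \<bullet> (A *v u)) \<le> w \<bullet> (A *v w)"
      unfolding wA using a by (simp add: field_simps power2_eq_square)
    also have "\<dots> \<le> w \<bullet> (G *v w)" by (rule good_ge[OF g])
    finally show ?thesis unfolding bfgs_inner[OF g] wG by (simp add: power2_eq_square)
  qed
  show ?thesis using sy ge by (simp add: good_def)
qed

definition sigma :: "real^'n^'n \<Rightarrow> real" where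
  "sigma G = (\<Sum>i\<in>UNIV. axis i 1 \<bullet> (Ai *v ((G - A) *v axis i 1)))"

lemma sigma_nonneg: "good G \<Longrightarrow> 0 \<le> sigma G"
  unfolding sigma_def by (rule trace_psd[OF Ai_psd good_D(1)]) (auto intro: good_D(2))

lemma sigma_up: assumes "good G"
  shows "sigma G \<le> (\<Sum>i\<in>UNIV. axis i 1 \<bullet> ((G - A) *v axis i 1)) / \<mu>"
proof -
  define M where "M = (1/\<mu>) *\<^sub>R mat 1 - Ai"
  have Mv: "M *v x = (1/\<mu>) *\<^sub>R x - Ai *v x" for x
    by (simp add: M_def matrix_vector_mult_diff_rdistrib scaleR_matrix_vector_assoc[symmetric])
  have "0 \<le> w \<bullet> (M *v w)" for w
    using Ai_up[of w] mu_pos unfolding Mv by (simp add: inner_diff_right field_simps)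
  then have "0 \<le> (\<Sum>i\<in>UNIV. axis i 1 \<bullet> (M *v ((G - A) *v axis i 1)))"
    by (rule trace_psd[OF _ good_D(1)[OF assms]]) (auto intro: good_D(2)[OF assms])
  then show ?thesis unfolding Mv sigma_def
    by (simp add: inner_diff_right sum_subtractf sum_divide_distrib)
qed


lemma sigma_alt: "sigma H = (\<Sum>i\<in>UNIV. axis i 1 \<bullet> (Ai *v (H *v axis i 1))) - real CARD('n)"
  unfolding sigma_def
  by (simp add: matrix_vector_mult_diff_rdistrib matrix_vector_mult_diff_distrib inner_diff_right
      sum_subtractf AiA)

lemma sigma_bfgs:
  assumes g: "good G" and u: "u \<noteq> 0"
  shows "sigma (BFGS A G u) = sigma G - ((G *v u) \<bullet> (Ai *v (G *v u)) / (u \<bullet> (G *v u)) - 1)"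
proof -
  have a: "0 < u \<bullet> (A *v u)" using A_pd u by blast
  have gg: "0 < u \<bullet> (G *v u)" using good_pd g u by blast
  have uG: "u \<bullet> (G *v axis i 1) = (G *v u) $ i" for i
    using good_symm[OF g, of u "axis i 1"] by (simp add: axis_inner)
  have uA: "u \<bullet> (A *v axis i 1) = (A *v u) $ i" for i
    using symA[unfolded symm_def, rule_format, of u "axis i 1"] by (simp add: axis_inner)
  have pt: "axis i 1 \<bullet> (Ai *v (BFGS A G u *v axis i 1)) = axis i 1 \<bullet> (Ai *v (G *v axis i 1))
      - (1 / (u \<bullet> (G *v u))) * ((G *v u) $ i * (Ai *v (G *v u)) $ i)
      + (1 / (u \<bullet> (A *v u))) * ((A *v u) $ i * u $ i)" for i
    unfolding bfgs_mulv
    by (simp add: matrix_vector_right_distrib matrix_vector_mult_diff_distrib matrix_vector_mult_scaleR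
        inner_diff_right inner_add_right uG uA AiA axis_inner)
  have "(\<Sum>i\<in>UNIV. axis i 1 \<bullet> (Ai *v (BFGS A G u *v axis i 1))) =
      (\<Sum>i\<in>UNIV. axis i 1 \<bullet> (Ai *v (G *v axis i 1)))
      - (1 / (u \<bullet> (G *v u))) * (\<Sum>i\<in>UNIV. (G *v u) $ i * (Ai *v (G *v u)) $ i)
      + (1 / (u \<bullet> (A *v u))) * (\<Sum>i\<in>UNIV. (A *v u) $ i * u $ i)"
    unfolding pt by (simp add: sum.distrib sum_subtractf sum_distrib_left)
  also have "\<dots> = (\<Sum>i\<in>UNIV. axis i 1 \<bullet> (Ai *v (G *v axis i 1)))
      - (G *v u) \<bullet> (Ai *v (G *v u)) / (u \<bullet> (G *v u)) + 1"
    unfolding sum_comp using a by (simp add: inner_commute[of "A *v u"])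
  finally show ?thesis unfolding sigma_alt by simp
qed

lemma theta_decomp:
  assumes g: "good G" and u: "u \<noteq> 0"
  defines "a \<equiv> u \<bullet> (A *v u)" and "\<delta> \<equiv> u \<bullet> ((G - A) *v u)"
    and "e \<equiv> ((G - A) *v u) \<bullet> (Ai *v ((G - A) *v u))"
  shows "(G *v u) \<bullet> (Ai *v (G *v u)) = a + 2 * \<delta> + e" "u \<bullet> (G *v u) = a + \<delta>"
    "0 < a" "0 \<le> \<delta>" "0 \<le> e" "\<delta>^2 \<le> a * e"
proof -
  have Gu: "G *v u = A *v u + (G - A) *v u" by (simp add: matrix_vector_mult_diff_rdistrib)
  show "(G *v u) \<bullet> (Ai *v (G *v u)) = a + 2 * \<delta> + e"
    unfolding Gu a_def \<delta>_def e_def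
    using Ai_sym[of "A *v u" "(G - A) *v u"]
    by (simp add: matrix_vector_right_distrib inner_add_left inner_add_right AiA inner_commute)
  show "u \<bullet> (G *v u) = a + \<delta>" unfolding a_def \<delta>_def by (simp add: matrix_vector_mult_diff_rdistrib inner_diff_right)
  show "0 < a" unfolding a_def using A_pd u by blast
  show "0 \<le> \<delta>" unfolding \<delta>_def using good_D(2)[OF g] by blast
  show "0 \<le> e" unfolding e_def by (rule Ai_psd)
  show "\<delta>^2 \<le> a * e" unfolding a_def \<delta>_def e_def by (rule cs_Ai)
qed


definition theta :: "real^'n^'n \<Rightarrow> real^'n \<Rightarrow> real" where
  "theta G u = (G *v u) \<bullet> (Ai *v (G *v u)) / (u \<bullet> (G *v u)) - 1"

lemma theta_ge:
  assumes g: "good G" and u: "u \<noteq> 0"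
  shows "(u \<bullet> ((G - A) *v u)) / (u \<bullet> (A *v u)) \<le> theta G u" "0 \<le> theta G u"
proof -
  note d = theta_decomp[OF g u]
  define a where "a = u \<bullet> (A *v u)"
  define \<delta> where "\<delta> = u \<bullet> ((G - A) *v u)"
  define e where "e = ((G - A) *v u) \<bullet> (Ai *v ((G - A) *v u))"
  have a: "0 < a" "0 \<le> \<delta>" "0 \<le> e" "\<delta>^2 \<le> a * e" using d unfolding a_def \<delta>_def e_def by auto
  have th: "theta G u = (\<delta> + e) / (a + \<delta>)"
    unfolding theta_def d(1,2) a_def[symmetric] \<delta>_def[symmetric] e_def[symmetric] using a
    by (simp add: field_simps)
  have "\<delta> * (a + \<delta>) \<le> (\<delta> + e) * a" using a(4) by (simp add: algebra_simps power2_eq_square)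
  then show "(u \<bullet> ((G - A) *v u)) / (u \<bullet> (A *v u)) \<le> theta G u"
    unfolding th a_def[symmetric] \<delta>_def[symmetric] using a by (simp add: field_simps)
  show "0 \<le> theta G u" unfolding th using a by simp
qed

lemma greedy_step:
  assumes g: "good Gb" and gr: "greedy_vec A Gb u"
  shows "sigma (BFGS A Gb u) \<le> (1 - \<mu> / (real CARD('n) * L)) * sigma Gb"
proof -
  obtain k where uk: "u = axis k 1" using gr unfolding greedy_vec_def by auto
  have u: "u \<noteq> 0" using uk by simp
  define a where "a = u \<bullet> (A *v u)"
  define \<delta> where "\<delta> = u \<bullet> ((Gb - A) *v u)"
  have a: "0 < a" "0 \<le> \<delta>" using theta_decomp[OF g u] unfolding a_def \<delta>_def by auto
  have Lpos: "0 < L" using mu_pos muL by simp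
  have ei: "axis i 1 \<bullet> ((Gb - A) *v axis i 1) \<le> L * (\<delta> / a)" for i
  proof -
    define ai where "ai = axis i 1 \<bullet> (A *v axis i 1)"
    define di where "di = axis i 1 \<bullet> ((Gb - A) *v axis i 1)"
    have ai: "0 < ai" unfolding ai_def using A_pd[of "axis i 1"] by simp
    have aiL: "ai \<le> L" unfolding ai_def using upA[of "axis i 1"] by (simp add: inner_axis_axis)
    have "(axis i 1 \<bullet> (Gb *v axis i 1)) / ai \<le> (u \<bullet> (Gb *v u)) / a"
      using gr unfolding greedy_vec_def ai_def a_def by auto
    moreover have "axis i 1 \<bullet> (Gb *v axis i 1) = ai + di" "u \<bullet> (Gb *v u) = a + \<delta>"
      unfolding ai_def di_def a_def \<delta>_def by (simp_all add: matrix_vector_mult_diff_rdistrib inner_diff_right)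
    ultimately have "(ai + di) / ai \<le> (a + \<delta>) / a" by simp
    then have "di / ai \<le> \<delta> / a" using ai a by (simp add: add_divide_distrib)
    then have "di \<le> ai * (\<delta> / a)" using ai by (simp add: field_simps)
    also have "\<dots> \<le> L * (\<delta> / a)" using aiL a by (intro mult_right_mono) auto
    finally show ?thesis unfolding di_def .
  qed
  have "sigma Gb \<le> (\<Sum>i\<in>UNIV. axis i 1 \<bullet> ((Gb - A) *v axis i 1)) / \<mu>" by (rule sigma_up[OF g])
  also have "\<dots> \<le> (\<Sum>i\<in>(UNIV::'n set). L * (\<delta> / a)) / \<mu>"
    using mu_pos by (intro divide_right_mono sum_mono ei) auto
  finally have "sigma Gb \<le> real CARD('n) * L * (\<delta> / a) / \<mu>" by simp
  then have h: "\<mu> * sigma Gb \<le> real CARD('n) * L * (\<delta> / a)"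
  proof -
    have "sigma Gb * \<mu> \<le> real CARD('n) * L * (\<delta> / a)"
      using \<open>sigma Gb \<le> real CARD('n) * L * (\<delta> / a) / \<mu>\<close> mu_pos by (simp add: pos_le_divide_eq del: times_divide_eq_right times_divide_eq_left)
    then show ?thesis by (simp add: mult.commute)
  qed
  have dLpos: "0 < real CARD('n) * L" using Lpos by simp
  have "\<mu> / (real CARD('n) * L) * sigma Gb = (\<mu> * sigma Gb) / (real CARD('n) * L)" by simp
  also have "\<dots> \<le> (real CARD('n) * L * (\<delta> / a)) / (real CARD('n) * L)"
    using h dLpos by (intro divide_right_mono) auto
  also have "\<dots> = \<delta> / a" using dLpos by (simp only: nonzero_mult_div_cancel_left less_irrefl)
  finally have "\<mu> / (real CARD('n) * L) * sigma Gb \<le> \<delta> / a" .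
  also have "\<dots> \<le> theta Gb u" using theta_ge(1)[OF g u] unfolding a_def \<delta>_def .
  finally have "\<mu> / (real CARD('n) * L) * sigma Gb \<le> theta Gb u" .
  moreover have "sigma (BFGS A Gb u) = sigma Gb - theta Gb u"
    using sigma_bfgs[OF g u] unfolding theta_def by simp
  ultimately show ?thesis by (simp add: algebra_simps)
qed

lemma secant_step:
  assumes g: "good G" and gz: "A *v x + b \<noteq> 0"
    and x': "x' = x - matrix_inv G *v (A *v x + b)"
  shows "x' - x \<noteq> 0"
    "(A *v x' + b) \<bullet> (Ai *v (A *v x' + b)) \<le> theta G (x' - x) * ((A *v x + b) \<bullet> (Ai *v (A *v x + b)))"
    "sigma (BFGS A G (x' - x)) = sigma G - theta G (x' - x)"
proof -
  define s where "s = x' - x"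
  define gr where "gr = A *v x + b"
  have Gs: "G *v s = - gr" unfolding s_def x' gr_def using mv_inv(1)[OF good_inv[OF g]]
    by (simp add: matrix_vector_mult_diff_distrib mv_neg)
  have s: "s \<noteq> 0" using Gs gz unfolding gr_def by auto
  then show "x' - x \<noteq> 0" unfolding s_def .
  have gr': "A *v x' + b = - ((G - A) *v s)"
  proof -
    have "x' = x + s" unfolding s_def by simp
    then have "A *v x' + b = gr + A *v s" unfolding gr_def by (simp add: matrix_vector_right_distrib)
    then show ?thesis using Gs by (simp add: matrix_vector_mult_diff_rdistrib)
  qed
  note d = theta_decomp[OF g s]
  define a where "a = s \<bullet> (A *v s)"
  define \<delta> where "\<delta> = s \<bullet> ((G - A) *v s)"
  define e where "e = ((G - A) *v s) \<bullet> (Ai *v ((G - A) *v s))"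
  have a: "0 < a" "0 \<le> \<delta>" "0 \<le> e" using d unfolding a_def \<delta>_def e_def by auto
  have th: "theta G s = (\<delta> + e) / (a + \<delta>)"
    unfolding theta_def d(1,2) a_def[symmetric] \<delta>_def[symmetric] e_def[symmetric] using a
    by (simp add: field_simps)
  have L1: "(A *v x' + b) \<bullet> (Ai *v (A *v x' + b)) = e"
    unfolding gr' e_def by (simp add: mv_neg)
  have L0: "gr \<bullet> (Ai *v gr) = a + 2 * \<delta> + e"
  proof -
    have "gr = - (G *v s)" using Gs by simp
    then show ?thesis using d(1) unfolding a_def \<delta>_def e_def by (simp add: mv_neg)
  qed
  have "e * (a + \<delta>) \<le> (\<delta> + e) * (a + 2 * \<delta> + e)"
    using a by (simp add: algebra_simps)
  then have "e \<le> (\<delta> + e) / (a + \<delta>) * (a + 2 * \<delta> + e)"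
    using a by (simp add: field_simps)
  then show "(A *v x' + b) \<bullet> (Ai *v (A *v x' + b)) \<le> theta G (x' - x) * ((A *v x + b) \<bullet> (Ai *v (A *v x + b)))"
    unfolding L1 s_def[symmetric] gr_def[symmetric] L0 th .
  show "sigma (BFGS A G (x' - x)) = sigma G - theta G (x' - x)"
    using sigma_bfgs[OF g] s unfolding theta_def s_def by simp
qed


end


theorem theorem2:
  fixes A :: "real^'n^'n" and b :: "real^'n" and \<mu> L :: real
    and x :: "nat \<Rightarrow> real^'n" and G :: "nat \<Rightarrow> real^'n^'n"
  assumes "0 < \<mu>" and "\<mu> \<le> L"
    and "transpose A = A"
    and "\<And>v. \<mu> * (v \<bullet> v) \<le> v \<bullet> (A *v v)"
    and "\<And>v. v \<bullet> (A *v v) \<le> L * (v \<bullet> v)"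
    and "sharpened_bfgs A b L x G"
    and "\<And>t. quad_grad A b (x t) \<noteq> 0"
    and "1 \<le> t"
  shows "newton_decrement A b (x t) \<le>
           root 4 ((1 - \<mu> / (real CARD('n) * L)) ^ (t * (t - 1)))
           * sqrt ((real CARD('n) * L / (real t * \<mu>)) ^ t)
           * newton_decrement A b (x 0)"
proof -
  have symA: "symm A"
  proof -
    have "x \<bullet> (A *v y) = y \<bullet> (A *v x)" for x y
    proof -
      have "x \<bullet> (A *v y) = (x v* A) \<bullet> y" by (simp add: dot_lmul_matrix)
      also have "x v* A = transpose A *v x" by simp
      also have "\<dots> = A *v x" using assms(3) by simp
      finally show ?thesis by (simp add: inner_commute)
    qed
    then show ?thesis by (simp add: symm_def)
  qed
  interpret qs A \<mu> L using assms(1,2,4,5) symA by unfold_locales auto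
  note sb = assms(6)[unfolded sharpened_bfgs_def Let_def]
  have G0: "G 0 = L *\<^sub>R mat 1" using sb by blast
  have xs: "x (Suc t) = x t - matrix_inv (G t) *v (A *v x t + b)" for t
    using sb by (simp add: quad_grad_def)
  define Gb where "Gb t = BFGS A (G t) (x (Suc t) - x t)" for t
  have "\<forall>t. \<exists>u. greedy_vec A (Gb t) u \<and> G (Suc t) = BFGS A (Gb t) u"
    using sb unfolding Gb_def by blast
  then obtain u where u: "\<And>t. greedy_vec A (Gb t) (u t)" "\<And>t. G (Suc t) = BFGS A (Gb t) (u t)"
    by metis
  have unz: "u t \<noteq> 0" for t using u(1)[of t] unfolding greedy_vec_def by auto
  have gz: "A *v x t + b \<noteq> 0" for t using assms(7)[of t] by (simp add: quad_grad_def)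
  have good0: "good (G 0)"
    unfolding G0 good_def symm_def
    using upA by (simp add: scaleR_matrix_vector_assoc[symmetric] inner_commute)
  have goodG: "good (G t)" for t
  proof (induction t)
    case (Suc t)
    have "good (Gb t)" unfolding Gb_def
      by (rule good_bfgs[OF Suc secant_step(1)[OF Suc gz xs]])
    then show ?case unfolding u(2) by (rule good_bfgs[OF _ unz])
  qed (rule good0)
  have goodGb: "good (Gb t)" for t unfolding Gb_def
    by (rule good_bfgs[OF goodG secant_step(1)[OF goodG gz xs]])
  define q where "q = 1 - \<mu> / (real CARD('n) * L)"
  define \<Lambda> where "\<Lambda> t = (A *v x t + b) \<bullet> (Ai *v (A *v x t + b))" for t
  define \<sigma> where "\<sigma> t = sigma (G t)" for t
  define \<theta> where "\<theta> t = theta (G t) (x (Suc t) - x t)" for t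
  have sGb: "sigma (Gb t) = \<sigma> t - \<theta> t" for t
    unfolding Gb_def \<sigma>_def \<theta>_def by (rule secant_step(3)[OF goodG gz xs])
  have F1: "\<sigma> (Suc t) \<le> q * (\<sigma> t - \<theta> t)" for t
    using greedy_step[OF goodGb u(1)] unfolding \<sigma>_def q_def u(2) sGb[unfolded \<sigma>_def] by simp
  have F2: "\<Lambda> (Suc t) \<le> \<theta> t * \<Lambda> t" for t
    unfolding \<Lambda>_def \<theta>_def by (rule secant_step(2)[OF goodG gz xs])
  have s0: "0 \<le> \<sigma> t" for t unfolding \<sigma>_def by (rule sigma_nonneg[OF goodG])
  have th0: "0 \<le> \<theta> t" for t unfolding \<theta>_def by (rule theta_ge(2)[OF goodG secant_step(1)[OF goodG gz xs]])
  have l0: "0 \<le> \<Lambda> t" for t unfolding \<Lambda>_def by (rule Ai_psd)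
  have lpos: "0 < \<Lambda> t" for t
    using l0[of t] Ai_zero[of "A *v x t + b"] gz[of t] unfolding \<Lambda>_def by linarith
  have Lpos: "0 < L" using assms(1,2) by simp
  have S: "\<sigma> 0 \<le> real CARD('n) * L / \<mu>"
  proof -
    have "\<sigma> 0 \<le> (\<Sum>i\<in>UNIV. axis i 1 \<bullet> ((G 0 - A) *v axis i 1)) / \<mu>"
      unfolding \<sigma>_def by (rule sigma_up[OF goodG])
    also have "\<dots> \<le> (\<Sum>i\<in>(UNIV::'n set). L) / \<mu>"
    proof (intro divide_right_mono sum_mono)
      fix i :: 'n
      have "axis i 1 \<bullet> ((G 0 - A) *v axis i 1) = L - axis i 1 \<bullet> (A *v axis i 1)"
        unfolding G0 by (simp add: matrix_vector_mult_diff_rdistrib inner_diff_right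
            scaleR_matrix_vector_assoc[symmetric] inner_axis_axis)
      then show "axis i 1 \<bullet> ((G 0 - A) *v axis i 1) \<le> L" using A_psd[of "axis i 1"] by simp
    qed (use assms(1) in simp)
    finally show ?thesis by simp
  qed
  have q0: "0 \<le> q"
  proof -
    have "\<mu> / (real CARD('n) * L) \<le> 1"
    proof -
      have c1: "1 \<le> real CARD('n)" by simp
      have "\<mu> \<le> 1 * L" using assms(2) by simp
      also have "\<dots> \<le> real CARD('n) * L" using c1 Lpos by (intro mult_right_mono) auto
      finally show ?thesis using Lpos by simp
    qed
    then show ?thesis unfolding q_def by simp
  qed
  have qpos: "0 < q"
  proof (rule ccontr)
    assume "\<not> 0 < q"
    then have q00: "q = 0" using q0 by simp
    have "\<sigma> 1 \<le> 0" using F1[of 0] q00 by simp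
    then have "\<sigma> 1 = 0" using s0[of 1] by simp
    moreover have "\<theta> 1 \<le> \<sigma> 1" using sigma_nonneg[OF goodGb, of 1] sGb[of 1] by simp
    ultimately have "\<theta> 1 = 0" using th0[of 1] by simp
    then have "\<Lambda> 2 \<le> 0" using F2[of 1] by (simp add: numeral_2_eq_2)
    then show False using lpos[of 2] by simp
  qed
  have main: "\<Lambda> t \<le> q ^ (t * (t - 1) div 2) * (real CARD('n) * L / \<mu> / t) ^ t * \<Lambda> 0"
    by (rule real_part[OF qpos F1 s0 th0 F2 l0 S assms(8)])
  have nd: "newton_decrement A b (x k) = sqrt (\<Lambda> k)" for k
    by (simp add: newton_decrement_def quad_grad_def \<Lambda>_def)
  define m where "m = t * (t - 1) div 2"
  have tm: "t * (t - 1) = 2 * m"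
  proof -
    have "even (t * (t - 1))" by (cases t) auto
    then show ?thesis unfolding m_def by simp
  qed
  have r4: "root 4 (q ^ (t * (t - 1))) = sqrt (q ^ m)"
  proof -
    have "root 4 (q ^ (t * (t - 1))) = root 2 (root 2 ((q ^ m) ^ 2))"
      unfolding tm using real_root_mult_exp[of 2 2] by (simp add: power_mult mult.commute)
    also have "root 2 ((q ^ m) ^ 2) = q ^ m" using q0 by (simp add: real_root_pos2)
    finally show ?thesis by (simp add: sqrt_def)
  qed
  have eqS: "real CARD('n) * L / \<mu> / t = real CARD('n) * L / (real t * \<mu>)" by simp
  have "newton_decrement A b (x t) = sqrt (\<Lambda> t)" by (rule nd)
  also have "\<dots> \<le> sqrt (q ^ m * (real CARD('n) * L / (real t * \<mu>)) ^ t * \<Lambda> 0)"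
    using main unfolding m_def eqS by simp
  also have "\<dots> = sqrt (q ^ m) * sqrt ((real CARD('n) * L / (real t * \<mu>)) ^ t) * sqrt (\<Lambda> 0)"
    by (simp add: real_sqrt_mult)
  finally show ?thesis unfolding r4[unfolded q_def] nd[of 0] q_def .
qed

end
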